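(* Let $1\le m<n$, let $\mathbf{b}\in\{0,1\}^{n-m}$ with $\mathbf{b}\neq\mathbf{0}_{n-m}$, let $y\in\mathbb{Q}[t]$, and let $c,c'$ be elements of multi-degree $\mathbf{W}\in\mathbb{N}^m$ of $\mathcal{L}^{\mathbb{Q}}_{T^m}(\mathbb{Q}[t];\mathbb{Q})$. If $c\sim c'$ in $\mathrm{Tot}(\mathcal{L}^{\mathbb{Q}}_{T^m}(\mathbb{Q}[t];\mathbb{Q}))$, then \[c_{(-,\mathbf{0}_{n-m})}\otimes y_{(\mathbf{0}_m,\mathbf{b})}\sim c'_{(-,\mathbf{0}_{n-m})}\otimes y_{(\mathbf{0}_m,\mathbf{b})}\] in multi-degree $(\mathbf{W},\mathbf{1}_{n-m})$ of $\mathrm{Tot}(\mathcal{L}^{\mathbb{Q}}_{T^n}(\mathbb{Q}[t];\mathbb{Q}))$.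
   Context: The $n$-chain complex $\mathcal{L}^{\mathbb{Q}}_{T^n}(\mathbb{Q}[t];\mathbb{Q})$: in multi-degree $\mathbf{V}\in\mathbb{N}^n$, elements are sums of multi-matrices of size $(v_1+1)\times\cdots\times(v_n+1)$ with entries in $\mathbb{Q}[t]$ at coordinates $\mathbf{v}\ne\mathbf{0}_n$ ($\mathbf{0}\le\mathbf{v}\le\mathbf{V}$) and in $\mathbb{Q}$ at $\mathbf{0}_n$ (tensors over $\mathbb{Q}$; $\mathbb{Q}$ a $\mathbb{Q}[t]$-module via $t\mapsto0$). In direction $i$ the slices are indexed by $j\in\{0,\dots,v_i\}$; $d_{i,j}$ ($j<v_i$) multiplies slices $j$ and $j+1$ entrywise and $d_{i,v_i}$ multiplies slice $v_i$ into slice $0$; $\mathrm{d}_i=\sum_j(-1)^jd_{i,j}$, and the total differential is $\mathrm{d}=\sum_i(-1)^{v_1+\cdots+v_{i-1}}\mathrm{d}_i$. $\sim$ means differing by a boundary in the total complex. For a multi-matrix $c$ in multi-degree $\mathbf{W}$ with entries $c_{\mathbf{a}}$, $c_{(-,\mathbf{0})}\otimes y_{(\mathbf{0},\mathbf{b})}$ is the multi-matrix in multi-degree $(\mathbf{W},\mathbf{1}_{n-m})$ with $c_{\mathbf{a}}$ at $(\mathbf{a},\mathbf{0}_{n-m})$, $y$ at $(\mathbf{0}_m,\mathbf{b})$, $1$ elsewhere, extended linearly to sums. *)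

theory Defs
  imports "HOL-Computational_Algebra.Polynomial"
begin

text \<open>Model of the n-chain complex L^Q_{T^n}(Q[t];Q).
  The tensor product (over Q) of copies of Q[t] indexed by the non-origin grid
  points, tensored with Q at the origin, is identified with the polynomial ring
  in one variable t_v per non-origin grid point v.  A monomial is an exponent
  function on grid points; a chain is a finitely supported coefficient function
  on monomials.\<close>

type_synonym mono = "nat list \<Rightarrow> nat"
type_synonym chain = "mono \<Rightarrow> rat"

definition grid_pt :: "nat \<Rightarrow> nat list \<Rightarrow> nat list \<Rightarrow> bool" where
  "grid_pt n V v \<longleftrightarrow> length v = n \<and> length V = n \<and> (\<forall>k<n. v ! k \<le> V ! k)
      \<and> v \<noteq> replicate n 0"

definition valid_chain :: "nat \<Rightarrow> nat list \<Rightarrow> chain \<Rightarrow> bool" where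
  "valid_chain n V p \<longleftrightarrow> finite {M. p M \<noteq> 0} \<and>
     (\<forall>M. p M \<noteq> 0 \<longrightarrow> (\<forall>v. M v \<noteq> 0 \<longrightarrow> grid_pt n V v))"

definition coface :: "nat list \<Rightarrow> nat \<Rightarrow> nat \<Rightarrow> nat list \<Rightarrow> nat list" where
  "coface V i j v = v[i := (let x = v ! i in
      if j < V ! i then (if x \<le> j then x else x - 1)
      else (if x = V ! i then 0 else x))]"

text \<open>Image of a monomial under the multiplication map induced by phi;
  None means the monomial is killed (a variable lands at the origin, t maps to 0).\<close>
definition push :: "(nat list \<Rightarrow> nat list) \<Rightarrow> nat \<Rightarrow> mono \<Rightarrow> mono option" where
  "push \<phi> n M = (if \<exists>v. M v \<noteq> 0 \<and> \<phi> v = replicate n 0 then None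
      else Some (\<lambda>w. \<Sum>v\<in>{v. M v \<noteq> 0 \<and> \<phi> v = w}. M v))"

definition face :: "nat \<Rightarrow> nat list \<Rightarrow> nat \<Rightarrow> nat \<Rightarrow> chain \<Rightarrow> chain" where
  "face n V i j p = (\<lambda>M'. \<Sum>M\<in>{M. p M \<noteq> 0 \<and> push (coface V i j) n M = Some M'}. p M)"

definition dir :: "nat \<Rightarrow> nat list \<Rightarrow> nat \<Rightarrow> chain \<Rightarrow> chain" where
  "dir n V i p = (\<lambda>M. \<Sum>j\<le>V ! i. (-1) ^ j * face n V i j p M)"

definition Dtot :: "nat \<Rightarrow> (nat list \<Rightarrow> chain) \<Rightarrow> nat list \<Rightarrow> chain" where
  "Dtot n X U = (\<lambda>M. \<Sum>i<n. (-1) ^ sum_list (take i U) *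
      dir n (U[i := Suc (U ! i)]) i (X (U[i := Suc (U ! i)])) M)"

definition tot_chain :: "nat \<Rightarrow> nat \<Rightarrow> (nat list \<Rightarrow> chain) \<Rightarrow> bool" where
  "tot_chain n k X \<longleftrightarrow> (\<forall>U. valid_chain n U (X U)) \<and>
     (\<forall>U. X U \<noteq> (\<lambda>M. 0) \<longrightarrow> length U = n \<and> sum_list U = k)"

definition homologous :: "nat \<Rightarrow> nat list \<Rightarrow> chain \<Rightarrow> chain \<Rightarrow> bool" where
  "homologous n W c c' \<longleftrightarrow> (\<exists>X. tot_chain n (sum_list W + 1) X \<and>
     (\<forall>U. length U = n \<longrightarrow>
        Dtot n X U = (if U = W then (\<lambda>M. c M - c' M) else (\<lambda>M. 0))))"

definition tensor_ext :: "nat \<Rightarrow> nat \<Rightarrow> nat list \<Rightarrow> rat poly \<Rightarrow> chain \<Rightarrow> chain" where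
  "tensor_ext m n b y c = (\<lambda>M.
     if (\<forall>v. M v \<noteq> 0 \<longrightarrow> (\<exists>a. length a = m \<and> v = a @ replicate (n - m) 0)
                          \<or> v = replicate m 0 @ b)
     then c (\<lambda>a. if length a = m then M (a @ replicate (n - m) 0) else 0)
          * coeff y (M (replicate m 0 @ b))
     else 0)"

end

theory Submission
  imports Defs
begin

lemma coface_app:
  assumes "length a = length V" "i < length V"
  shows "coface (V @ Os) i j (a @ Z) = coface V i j a @ Z"
  using assms by (simp add: coface_def Let_def nth_append list_update_append)

lemma coface_zero:
  assumes "v ! i = 0"
  shows "coface V i j v = v"
  using assms by (simp add: coface_def Let_def) (metis list_update_id)

lemma length_coface[simp]: "length (coface V i j a) = length a"
  by (simp add: coface_def)

lemma push_cong:
  assumes "\<And>v. M v \<noteq> 0 \<Longrightarrow> \<phi> v = \<psi> v"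
  shows "push \<phi> n M = push \<psi> n M"
proof -
  have "\<And>w. {v. M v \<noteq> 0 \<and> \<phi> v = w} = {v. M v \<noteq> 0 \<and> \<psi> v = w}" using assms by auto
  moreover have "(\<exists>v. M v \<noteq> 0 \<and> \<phi> v = replicate n 0) = (\<exists>v. M v \<noteq> 0 \<and> \<psi> v = replicate n 0)"
    using assms by auto
  ultimately show ?thesis unfolding push_def by simp
qed

lemma dir_one:
  assumes "valid_chain n V p" "i < n" "V ! i = 1"
  shows "dir n V i p = (\<lambda>M. 0)"
proof -
  have "face n V i 0 p = face n V i 1 p"
  proof -
    have "\<And>M. p M \<noteq> 0 \<Longrightarrow> push (coface V i 0) n M = push (coface V i 1) n M"
    proof -
      fix M assume "p M \<noteq> 0"
      hence g: "\<And>v. M v \<noteq> 0 \<Longrightarrow> grid_pt n V v" using assms(1) unfolding valid_chain_def by blast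
      show "push (coface V i 0) n M = push (coface V i 1) n M"
      proof (rule push_cong)
        fix v assume "M v \<noteq> 0"
        hence "v ! i \<le> 1" using g[of v] assms unfolding grid_pt_def by metis
        thus "coface V i 0 v = coface V i 1 v" using assms(3)
          by (cases "v ! i") (auto simp: coface_def Let_def)
      qed
    qed
    hence "\<And>M'. {M. p M \<noteq> 0 \<and> push (coface V i 0) n M = Some M'} = {M. p M \<noteq> 0 \<and> push (coface V i 1) n M = Some M'}"
      by auto
    thus ?thesis unfolding face_def by simp
  qed
  thus ?thesis unfolding dir_def using assms(3) by (auto simp: fun_eq_iff)
qed

lemma dir_zero: "dir n V i (\<lambda>M. 0) = (\<lambda>M. 0)"
  by (simp add: dir_def face_def)

locale tsetup =
  fixes m n :: nat and b :: "nat list" and y :: "rat poly"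
  assumes mn: "m < n" and lb: "length b = n - m" and bnz: "b \<noteq> replicate (n - m) 0"
    and b01: "set b \<subseteq> {0, 1}"
begin

abbreviation "Z \<equiv> replicate (n - m) (0::nat)"
abbreviation "Os \<equiv> replicate (n - m) (1::nat)"
definition "e = replicate m 0 @ b"
definition "tf M \<longleftrightarrow> (\<forall>v. M v \<noteq> 0 \<longrightarrow> (\<exists>a. length a = m \<and> v = a @ Z) \<or> v = e)"
definition "res M = (\<lambda>a. if length a = m then M (a @ Z) else (0::nat))"
definition "ext R k = (\<lambda>v. if v = e then k else if length v = n \<and> drop m v = Z then R (take m v) else (0::nat))"

lemma te: "tensor_ext m n b y p M = (if tf M then p (res M) * coeff y (M e) else 0)"
  unfolding tensor_ext_def tf_def res_def e_def by simp

lemma app_ne_e: "length a = m \<Longrightarrow> a @ Z \<noteq> e"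
  using bnz lb by (auto simp: e_def)

lemma e_len: "length e = n" using lb mn by (simp add: e_def)

lemma e_nz: "e \<noteq> replicate n 0"
proof
  assume "e = replicate n 0"
  hence "drop m e = drop m (replicate n 0)" by simp
  thus False using bnz lb by (simp add: e_def)
qed

lemma e_drop: "drop m e \<noteq> Z" using bnz by (simp add: e_def)

lemma tf_ext: "tf M \<Longrightarrow> M = ext (res M) (M e)"
proof (rule ext)
  fix v assume t: "tf M"
  show "M v = ext (res M) (M e) v"
  proof (cases "v = e")
    case True thus ?thesis by (simp add: ext_def)
  next
    case False
    show ?thesis
    proof (cases "length v = n \<and> drop m v = Z")
      case True
      hence "v = take m v @ Z" by (metis append_take_drop_id)
      moreover have "length (take m v) = m" using True mn by simp
      ultimately show ?thesis using True False by (simp add: ext_def res_def)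
    next
      case F2: False
      have "M v = 0"
      proof (rule ccontr)
        assume "M v \<noteq> 0"
        then obtain a where "length a = m" "v = a @ Z" using t False unfolding tf_def by blast
        thus False using F2 mn by simp
      qed
      thus ?thesis using False F2 by (auto simp: ext_def)
    qed
  qed
qed

lemma tf_of_ext: "tf (ext R k)"
  unfolding tf_def
proof (intro allI impI)
  fix v assume "ext R k v \<noteq> 0"
  hence "v = e \<or> (length v = n \<and> drop m v = Z)" unfolding ext_def by (auto split: if_splits)
  thus "(\<exists>a. length a = m \<and> v = a @ Z) \<or> v = e"
  proof
    assume h: "length v = n \<and> drop m v = Z"
    hence "v = take m v @ Z" by (metis append_take_drop_id)
    moreover have "length (take m v) = m" using h mn by simp
    ultimately show ?thesis by blast
  qed simp
qed

lemma ext_e[simp]: "ext R k e = k" by (simp add: ext_def)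

lemma res_ext: "(\<And>a. R a \<noteq> 0 \<Longrightarrow> length a = m) \<Longrightarrow> res (ext R k) = R"
proof (rule ext)
  fix a assume "\<And>a. R a \<noteq> 0 \<Longrightarrow> length a = m"
  thus "res (ext R k) a = R a"
    using app_ne_e[of a] mn by (auto simp: res_def ext_def)
qed

lemma e_i: "i < m \<Longrightarrow> e ! i = 0" by (simp add: e_def nth_append)

lemma res_len: "res M a \<noteq> 0 \<Longrightarrow> length a = m" by (simp add: res_def split: if_splits)

lemma rep_split: "replicate n (0::nat) = replicate m 0 @ Z"
  using mn by (metis le_add_diff_inverse less_imp_le replicate_add)

lemma push_tf:
  assumes t: "tf M" and lV: "length V = m" and im: "i < m"
  shows "push (coface (V @ Os) i j) n M =
    (case push (coface V i j) m (res M) of None \<Rightarrow> None | Some R' \<Rightarrow> Some (ext R' (M e)))"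
proof -
  let ?p = "coface (V @ Os) i j" and ?q = "coface V i j"
  have pe: "?p e = e" by (rule coface_zero) (simp add: e_i im)
  have pa: "\<And>a. length a = m \<Longrightarrow> ?p (a @ Z) = ?q a @ Z"
    using coface_app lV im by metis
  have cond: "(\<exists>v. M v \<noteq> 0 \<and> ?p v = replicate n 0) \<longleftrightarrow> (\<exists>a. res M a \<noteq> 0 \<and> ?q a = replicate m 0)"
  proof
    assume "\<exists>v. M v \<noteq> 0 \<and> ?p v = replicate n 0"
    then obtain v where v: "M v \<noteq> 0" "?p v = replicate n 0" by blast
    show "\<exists>a. res M a \<noteq> 0 \<and> ?q a = replicate m 0"
    proof (cases "v = e")
      case True thus ?thesis using v pe e_nz by simp
    next
      case False
      then obtain a where a: "length a = m" "v = a @ Z" using t v unfolding tf_def by blast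
      hence "?q a @ Z = replicate m 0 @ Z" using v pa rep_split by simp
      hence "?q a = replicate m 0" by simp
      thus ?thesis using a v by (auto simp: res_def)
    qed
  next
    assume "\<exists>a. res M a \<noteq> 0 \<and> ?q a = replicate m 0"
    then obtain a where a: "res M a \<noteq> 0" "?q a = replicate m 0" by blast
    have la: "length a = m" using a res_len by blast
    show "\<exists>v. M v \<noteq> 0 \<and> ?p v = replicate n 0"
      using a la pa[OF la] rep_split by (intro exI[of _ "a @ Z"]) (auto simp: res_def)
  qed
  show ?thesis
  proof (cases "\<exists>a. res M a \<noteq> 0 \<and> ?q a = replicate m 0")
    case True thus ?thesis using cond by (simp add: push_def)
  next
    case False
    hence F': "\<not> (\<exists>v. M v \<noteq> 0 \<and> ?p v = replicate n 0)" using cond by blast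
    have "(\<lambda>w. \<Sum>v\<in>{v. M v \<noteq> 0 \<and> ?p v = w}. M v) =
          ext (\<lambda>w. \<Sum>a\<in>{a. res M a \<noteq> 0 \<and> ?q a = w}. res M a) (M e)"
    proof (rule ext)
      fix w
      show "(\<Sum>v\<in>{v. M v \<noteq> 0 \<and> ?p v = w}. M v) =
          ext (\<lambda>w. \<Sum>a\<in>{a. res M a \<noteq> 0 \<and> ?q a = w}. res M a) (M e) w"
      proof (cases "w = e")
        case True
        have "{v. M v \<noteq> 0 \<and> ?p v = w} = (if M e \<noteq> 0 then {e} else {})"
        proof -
          have "v = e" if hv: "M v \<noteq> 0" "?p v = e" for v
          proof (rule ccontr)
            assume "v \<noteq> e"
            then obtain a where a: "length a = m" "v = a @ Z" using t hv unfolding tf_def by blast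
            hence "drop m (?p v) = Z" using pa by simp
            thus False using hv e_drop by simp
          qed
          thus ?thesis using True pe by (simp only: split: if_split) blast
        qed
        thus ?thesis using True by (simp add: ext_def)
      next
        case False
        show ?thesis
        proof (cases "length w = n \<and> drop m w = Z")
          case True
          have w: "w = take m w @ Z" using True by (metis append_take_drop_id)
          have "{v. M v \<noteq> 0 \<and> ?p v = w} = (\<lambda>a. a @ Z) ` {a. res M a \<noteq> 0 \<and> ?q a = take m w}"
          proof (intro set_eqI iffI)
            fix v assume v: "v \<in> {v. M v \<noteq> 0 \<and> ?p v = w}"
            show "v \<in> (\<lambda>a. a @ Z) ` {a. res M a \<noteq> 0 \<and> ?q a = take m w}"
            proof (cases "v = e")
              case True thus ?thesis using v pe False by simp
            next
              case F2: False
              then obtain a where a: "length a = m" "v = a @ Z" using t v unfolding tf_def by blast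
              hence "?q a @ Z = take m w @ Z" using v pa w by simp
              thus ?thesis using a v by (auto simp: res_def)
            qed
          next
            fix v assume "v \<in> (\<lambda>a. a @ Z) ` {a. res M a \<noteq> 0 \<and> ?q a = take m w}"
            then obtain a where a: "v = a @ Z" "res M a \<noteq> 0" "?q a = take m w" by blast
            have la: "length a = m" using a res_len by blast
            show "v \<in> {v. M v \<noteq> 0 \<and> ?p v = w}"
              using a la pa[OF la] w by (auto simp: res_def)
          qed
          moreover have "inj_on (\<lambda>a. a @ Z) A" for A by (simp add: inj_on_def)
          ultimately have "(\<Sum>v\<in>{v. M v \<noteq> 0 \<and> ?p v = w}. M v) =
             (\<Sum>a\<in>{a. res M a \<noteq> 0 \<and> ?q a = take m w}. M (a @ Z))"
            by (simp add: sum.reindex)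
          also have "\<dots> = (\<Sum>a\<in>{a. res M a \<noteq> 0 \<and> ?q a = take m w}. res M a)"
            by (rule sum.cong) (auto simp: res_def split: if_splits)
          finally show ?thesis using True False by (simp add: ext_def)
        next
          case F3: False
          have "{v. M v \<noteq> 0 \<and> ?p v = w} = {}"
          proof (rule ccontr)
            assume "{v. M v \<noteq> 0 \<and> ?p v = w} \<noteq> {}"
            then obtain v where v: "M v \<noteq> 0" "?p v = w" by blast
            show False
            proof (cases "v = e")
              case True thus False using v pe False by simp
            next
              case F2: False
              then obtain a where a: "length a = m" "v = a @ Z" using t v unfolding tf_def by blast
              thus False using v pa[OF a(1)] F3 mn by simp
            qed
          qed
          hence "(\<Sum>v\<in>{v. M v \<noteq> 0 \<and> ?p v = w}. M v) = 0" by (simp only: sum.empty)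
          thus ?thesis using False F3 by (auto simp add: ext_def)
        qed
      qed
    qed
    thus ?thesis using False F' by (simp add: push_def)
  qed
qed


lemma push_len:
  assumes "push \<phi> k R = Some R'" "\<And>a. R a \<noteq> 0 \<Longrightarrow> length a = m"
    "\<And>a. length (\<phi> a) = length a" "R' w \<noteq> 0"
  shows "length w = m"
proof -
  have "R' = (\<lambda>w. \<Sum>v\<in>{v. R v \<noteq> 0 \<and> \<phi> v = w}. R v)" using assms(1)
    by (simp add: push_def split: if_splits)
  hence "R' w = (\<Sum>v\<in>{v. R v \<noteq> 0 \<and> \<phi> v = w}. R v)" by simp
  hence "{v. R v \<noteq> 0 \<and> \<phi> v = w} \<noteq> {}" using assms(4) by (metis sum.empty)
  then obtain v where "R v \<noteq> 0" "\<phi> v = w" by blast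
  thus ?thesis using assms(2,3) by metis
qed

lemma supp_valid: "valid_chain m V p \<Longrightarrow> p R \<noteq> 0 \<Longrightarrow> R a \<noteq> 0 \<Longrightarrow> length a = m"
  unfolding valid_chain_def grid_pt_def by blast

lemma face_tensor:
  assumes vp: "valid_chain m V p" and lV: "length V = m" and im: "i < m"
  shows "face n (V @ Os) i j (tensor_ext m n b y p) M' = tensor_ext m n b y (face m V i j p) M'"
proof -
  let ?p = "coface (V @ Os) i j" and ?q = "coface V i j" and ?P = "tensor_ext m n b y p"
  let ?S = "{M. ?P M \<noteq> 0 \<and> push ?p n M = Some M'}"
  let ?T = "{R. p R \<noteq> 0 \<and> push ?q m R = Some (res M')}"
  have LHS: "face n (V @ Os) i j ?P M' = (\<Sum>M\<in>?S. ?P M)" by (simp add: face_def)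
  have RHS: "face m V i j p (res M') = (\<Sum>R\<in>?T. p R)" by (simp add: face_def)
  have inS: "tf M \<and> p (res M) * coeff y (M e) \<noteq> 0 \<and> push ?q m (res M) = Some (res M') \<and> M' e = M e"
    if "M \<in> ?S" for M
  proof -
    have tM: "tf M" and nz: "p (res M) * coeff y (M e) \<noteq> 0" using that by (auto simp: te split: if_splits)
    have ps: "push ?p n M = Some M'" using that by blast
    show ?thesis
    proof (cases "push ?q m (res M)")
      case None thus ?thesis using ps push_tf[OF tM lV im, of j] by simp
    next
      case (Some R')
      hence M': "M' = ext R' (M e)" using ps push_tf[OF tM lV im, of j] by simp
      have "res M' = R'" unfolding M'
        by (rule res_ext) (rule push_len[OF Some res_len length_coface])
      thus ?thesis using Some M' tM nz by simp
    qed
  qed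
  show ?thesis
  proof (cases "tf M' \<and> coeff y (M' e) \<noteq> 0")
    case False
    have "?S = {}"
    proof (rule ccontr)
      assume "?S \<noteq> {}"
      then obtain M where M: "M \<in> ?S" by blast
      from inS[OF this] have h: "tf M" "p (res M) * coeff y (M e) \<noteq> 0" "push ?q m (res M) = Some (res M')" "M' e = M e"
        by auto
      have "push ?p n M = Some (ext (res M') (M e))" using push_tf[OF h(1) lV im, of j] h(3) by simp
      hence "M' = ext (res M') (M e)" using M by (metis (mono_tags, lifting) mem_Collect_eq option.inject)
      hence "tf M'" using tf_of_ext by metis
      thus False using False h by simp
    qed
    hence "(\<Sum>M\<in>?S. ?P M) = 0" by (simp only: sum.empty)
    hence "face n (V @ Os) i j ?P M' = 0" using LHS by simp
    thus ?thesis using False by (auto simp: te)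
  next
    case True
    have suppT: "\<And>R a. R \<in> ?T \<Longrightarrow> R a \<noteq> 0 \<Longrightarrow> length a = m" using supp_valid[OF vp] by blast
    have Seq: "?S = (\<lambda>R. ext R (M' e)) ` ?T"
    proof (intro set_eqI iffI)
      fix M assume M: "M \<in> ?S"
      from inS[OF this] have h: "tf M" "p (res M) * coeff y (M e) \<noteq> 0" "push ?q m (res M) = Some (res M')" "M' e = M e"
        by auto
      have X: "M = ext (res M) (M e)" by (rule tf_ext[OF h(1)])
      have "M = ext (res M) (M' e)" using X unfolding h(4)[symmetric] .
      moreover have "res M \<in> ?T" using h by simp
      ultimately show "M \<in> (\<lambda>R. ext R (M' e)) ` ?T" by blast
    next
      fix M assume "M \<in> (\<lambda>R. ext R (M' e)) ` ?T"
      then obtain R where R: "R \<in> ?T" "M = ext R (M' e)" by blast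
      have rM: "res M = R" unfolding R(2) by (rule res_ext) (rule suppT[OF R(1)])
      have tM: "tf M" unfolding R(2) by (rule tf_of_ext)
      have Me: "M e = M' e" using R(2) by simp
      have "?P M \<noteq> 0" using R(1) rM tM Me True by (simp add: te)
      have "push ?p n M = Some (ext (res M') (M' e))"
        using push_tf[OF tM lV im, of j] rM Me R(1) by simp
      moreover have "ext (res M') (M' e) = M'" by (rule sym[OF tf_ext]) (use True in blast)
      ultimately have "push ?p n M = Some M'" by simp
      thus "M \<in> ?S" using \<open>?P M \<noteq> 0\<close> by blast
    qed
    have inj: "inj_on (\<lambda>R. ext R (M' e)) ?T"
    proof (rule inj_onI)
      fix R1 R2 assume r: "R1 \<in> ?T" "R2 \<in> ?T" "ext R1 (M' e) = ext R2 (M' e)"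
      have "R1 = res (ext R1 (M' e))" by (rule res_ext[symmetric]) (rule suppT[OF r(1)])
      also have "\<dots> = res (ext R2 (M' e))" using r(3) by simp
      also have "\<dots> = R2" by (rule res_ext) (rule suppT[OF r(2)])
      finally show "R1 = R2" .
    qed
    have "(\<Sum>M\<in>?S. ?P M) = (\<Sum>R\<in>?T. ?P (ext R (M' e)))"
      unfolding Seq by (rule sum.reindex[OF inj, unfolded comp_def])
    also have "\<dots> = (\<Sum>R\<in>?T. p R * coeff y (M' e))"
    proof (rule sum.cong[OF refl])
      fix R assume R: "R \<in> ?T"
      have "res (ext R (M' e)) = R" by (rule res_ext) (rule suppT[OF R])
      thus "?P (ext R (M' e)) = p R * coeff y (M' e)" using tf_of_ext by (simp add: te)
    qed
    also have "\<dots> = face m V i j p (res M') * coeff y (M' e)" using RHS by (simp add: sum_distrib_right)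
    finally show ?thesis using LHS True by (simp add: te)
  qed
qed


lemma tensor_lin:
  "tensor_ext m n b y (\<lambda>M. \<Sum>i\<in>A. s i * f i M) M = (\<Sum>i\<in>A. s i * tensor_ext m n b y (f i) M)"
  by (simp add: te sum_distrib_right mult.assoc)

lemma tensor_diff:
  "tensor_ext m n b y (\<lambda>M. c M - c' M) M = tensor_ext m n b y c M - tensor_ext m n b y c' M"
  by (simp add: te algebra_simps)

lemma tensor_zero: "tensor_ext m n b y (\<lambda>M. 0) = (\<lambda>M. 0)"
  by (simp add: te fun_eq_iff)

lemma dir_tensor:
  assumes vp: "valid_chain m V p" and lV: "length V = m" and im: "i < m"
  shows "dir n (V @ Os) i (tensor_ext m n b y p) = tensor_ext m n b y (dir m V i p)"
proof (rule ext)
  fix M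
  have vi: "(V @ Os) ! i = V ! i" using lV im by (simp add: nth_append)
  have "dir n (V @ Os) i (tensor_ext m n b y p) M = (\<Sum>j\<le>V ! i. (-1) ^ j * tensor_ext m n b y (face m V i j p) M)"
    unfolding dir_def vi face_tensor[OF vp lV im] ..
  also have "\<dots> = tensor_ext m n b y (dir m V i p) M"
    unfolding dir_def by (rule tensor_lin[symmetric])
  finally show "dir n (V @ Os) i (tensor_ext m n b y p) M = tensor_ext m n b y (dir m V i p) M" .
qed

lemma valid_tensor:
  assumes vp: "valid_chain m U p" and lU: "length U = m"
  shows "valid_chain n (U @ Os) (tensor_ext m n b y p)"
  unfolding valid_chain_def
proof (intro conjI allI impI)
  let ?P = "tensor_ext m n b y p"
  have "{M. ?P M \<noteq> 0} \<subseteq> (\<lambda>(R, k). ext R k) ` ({R. p R \<noteq> 0} \<times> {k. coeff y k \<noteq> 0})"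
  proof
    fix M assume "M \<in> {M. ?P M \<noteq> 0}"
    hence h: "tf M" "p (res M) \<noteq> 0" "coeff y (M e) \<noteq> 0" by (auto simp: te split: if_splits)
    have "M = ext (res M) (M e)" by (rule tf_ext[OF h(1)])
    thus "M \<in> (\<lambda>(R, k). ext R k) ` ({R. p R \<noteq> 0} \<times> {k. coeff y k \<noteq> 0})"
      using h by (intro image_eqI[of _ _ "(res M, M e)"]) auto
  qed
  moreover have "finite {R. p R \<noteq> 0}" using vp unfolding valid_chain_def by blast
  moreover have "finite {k. coeff y k \<noteq> 0}"
    by (rule finite_subset[of _ "{..degree y}"]) (auto intro: le_degree)
  ultimately show "finite {M. ?P M \<noteq> 0}" by (meson finite_SigmaI finite_imageI finite_subset)
next
  fix M v
  let ?P = "tensor_ext m n b y p"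
  assume "?P M \<noteq> 0" and Mv: "M v \<noteq> 0"
  hence h: "tf M" "p (res M) \<noteq> 0" "coeff y (M e) \<noteq> 0" by (auto simp: te split: if_splits)
  have lO: "length (U @ Os) = n" using lU mn by simp
  show "grid_pt n (U @ Os) v"
  proof (cases "v = e")
    case True
    have "e ! k \<le> (U @ Os) ! k" if "k < n" for k
    proof (cases "k < m")
      case True thus ?thesis by (simp add: e_def nth_append lU)
    next
      case False
      have "b ! (k - m) \<in> set b" using that False lb by simp
      hence "b ! (k - m) \<le> 1" using b01 by auto
      thus ?thesis using False that lU by (simp add: e_def nth_append)
    qed
    thus ?thesis using True e_len e_nz lO unfolding grid_pt_def by simp
  next
    case False
    then obtain a where a: "length a = m" "v = a @ Z" using h(1) Mv unfolding tf_def by blast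
    have "res M a \<noteq> 0" using a Mv by (simp add: res_def)
    hence g: "grid_pt m U a" using vp h(2) unfolding valid_chain_def by blast
    have "(a @ Z) ! k \<le> (U @ Os) ! k" if "k < n" for k
      using g that a lU unfolding grid_pt_def by (cases "k < m") (auto simp: nth_append)
    moreover have "a @ Z \<noteq> replicate n 0" using g rep_split unfolding grid_pt_def by simp
    ultimately show ?thesis using a lO mn unfolding grid_pt_def by simp
  qed
qed

end

lemma valid_zero: "valid_chain n V (\<lambda>M. 0)"
  by (simp add: valid_chain_def)

theorem lemma4p8:
  fixes m n :: nat and b W :: "nat list" and y :: "rat poly" and c c' :: chain
  assumes "1 \<le> m" and "m < n"
    and "length b = n - m" and "set b \<subseteq> {0, 1}" and "b \<noteq> replicate (n - m) 0"
    and "length W = m"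
    and "valid_chain m W c" and "valid_chain m W c'"
    and "homologous m W c c'"
  shows "homologous n (W @ replicate (n - m) 1) (tensor_ext m n b y c) (tensor_ext m n b y c')"
proof -
  interpret tsetup m n b y using assms by unfold_locales auto
  obtain X where tX: "tot_chain m (sum_list W + 1) X"
    and DX: "\<And>U. length U = m \<Longrightarrow> Dtot m X U = (if U = W then (\<lambda>M. c M - c' M) else (\<lambda>M. 0))"
    using assms(9) unfolding homologous_def by blast
  have vX: "\<And>U. valid_chain m U (X U)" and sX: "\<And>U. X U \<noteq> (\<lambda>M. 0) \<Longrightarrow> length U = m \<and> sum_list U = sum_list W + 1"
    using tX unfolding tot_chain_def by auto
  define X' where "X' U' = (if length U' = n \<and> drop m U' = Os then tensor_ext m n b y (X (take m U')) else (\<lambda>M. 0))" for U'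
  have split: "U' = take m U' @ Os" if "drop m U' = Os" for U' :: "nat list"
    using that by (metis append_take_drop_id)
  have vX': "valid_chain n U' (X' U')" for U'
  proof (cases "length U' = n \<and> drop m U' = Os")
    case True
    have "valid_chain n (take m U' @ Os) (tensor_ext m n b y (X (take m U')))"
      by (rule valid_tensor[OF vX]) (use True mn in simp)
    moreover have "take m U' @ Os = U'" using split[of U'] True by metis
    ultimately show ?thesis using True by (simp add: X'_def)
  next
    case False thus ?thesis unfolding X'_def using valid_zero by presburger
  qed
  have sX': "length U' = n \<and> sum_list U' = sum_list (W @ Os) + 1" if nz: "X' U' \<noteq> (\<lambda>M. 0)" for U'
  proof -
    have c: "length U' = n" "drop m U' = Os" using nz by (auto simp: X'_def split: if_splits)
    have "X (take m U') \<noteq> (\<lambda>M. 0)" using nz c tensor_zero by (auto simp: X'_def)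
    hence "sum_list (take m U') = sum_list W + 1" using sX by blast
    moreover have "sum_list U' = sum_list (take m U') + sum_list Os"
      by (subst split[OF c(2)]) (rule sum_list_append)
    ultimately show "length U' = n \<and> sum_list U' = sum_list (W @ Os) + 1" using c by simp
  qed
  have tX': "tot_chain n (sum_list (W @ Os) + 1) X'"
    unfolding tot_chain_def using vX' sX' by blast
  have D': "Dtot n X' U' = (if U' = W @ Os then (\<lambda>M. tensor_ext m n b y c M - tensor_ext m n b y c' M) else (\<lambda>M. 0))"
    if lU': "length U' = n" for U'
  proof (rule ext)
    fix M
    let ?Ui = "\<lambda>i. U'[i := Suc (U' ! i)]"
    let ?t = "\<lambda>i. (-1::rat) ^ sum_list (take i U') * dir n (?Ui i) i (X' (?Ui i)) M"
    have upper: "?t i = 0" if "m \<le> i" "i < n" for i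
    proof (cases "U' ! i = 0")
      case True
      have "dir n (?Ui i) i (X' (?Ui i)) = (\<lambda>M. 0)"
        by (rule dir_one[OF vX']) (use that lU' True in auto)
      thus ?thesis by simp
    next
      case False
      have "drop m (?Ui i) ! (i - m) = Suc (U' ! i)" using that lU' by simp
      moreover have "i - m < n - m" using that by simp
      ultimately have "drop m (?Ui i) \<noteq> Os"
      proof (intro notI)
        assume a: "drop m (?Ui i) ! (i - m) = Suc (U' ! i)" "i - m < n - m" "drop m (?Ui i) = Os"
        hence "Suc (U' ! i) = 1" by simp
        thus False using False by simp
      qed
      hence "X' (?Ui i) = (\<lambda>M. 0)" by (simp add: X'_def)
      thus ?thesis by (simp add: dir_zero)
    qed
    have "Dtot n X' U' M = (\<Sum>i<n. ?t i)" by (simp add: Dtot_def)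
    also have "\<dots> = (\<Sum>i<m. ?t i) + (\<Sum>i\<in>{m..<n}. ?t i)"
      using mn by (simp add: lessThan_atLeast0 sum.atLeastLessThan_concat)
    also have "(\<Sum>i\<in>{m..<n}. ?t i) = 0" using upper by simp
    finally have Dsum: "Dtot n X' U' M = (\<Sum>i<m. ?t i)" by simp
    show "Dtot n X' U' M = (if U' = W @ Os then (\<lambda>M. tensor_ext m n b y c M - tensor_ext m n b y c' M) else (\<lambda>M. 0)) M"
    proof (cases "drop m U' = Os")
      case False
      have "?t i = 0" if "i < m" for i
      proof -
        have "drop m (?Ui i) = drop m U'" using that by simp
        hence "X' (?Ui i) = (\<lambda>M. 0)" using False by (simp add: X'_def)
        thus ?thesis by (simp add: dir_zero)
      qed
      hence "Dtot n X' U' M = 0" using Dsum by simp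
      moreover have "U' \<noteq> W @ Os" using False assms(6) by auto
      ultimately show ?thesis by simp
    next
      case True
      define U where "U = take m U'"
      have lU: "length U = m" using lU' mn by (simp add: U_def)
      have U': "U' = U @ Os" using split[OF True] by (simp add: U_def)
      have "?t i = (-1::rat) ^ sum_list (take i U) * tensor_ext m n b y (dir m (U[i := Suc (U ! i)]) i (X (U[i := Suc (U ! i)]))) M"
        if "i < m" for i
      proof -
        have e1: "?Ui i = U[i := Suc (U ! i)] @ Os" using that lU unfolding U' by (simp add: list_update_append nth_append)
        have e2: "X' (?Ui i) = tensor_ext m n b y (X (U[i := Suc (U ! i)]))"
          using lU mn unfolding e1 X'_def by simp
        have e3: "take i U' = take i U" using that lU unfolding U' by simp
        show ?thesis unfolding e3 e2 unfolding e1
          using dir_tensor[OF vX, of "U[i := Suc (U ! i)]" i] lU that by simp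
      qed
      hence "Dtot n X' U' M = (\<Sum>i<m. (-1::rat) ^ sum_list (take i U) * tensor_ext m n b y (dir m (U[i := Suc (U ! i)]) i (X (U[i := Suc (U ! i)]))) M)"
        using Dsum by simp
      also have "\<dots> = tensor_ext m n b y (Dtot m X U) M"
        unfolding Dtot_def by (rule tensor_lin[symmetric])
      also have "\<dots> = (if U' = W @ Os then (\<lambda>M. tensor_ext m n b y c M - tensor_ext m n b y c' M) else (\<lambda>M. 0)) M"
        using DX[OF lU] U' lU assms(6) by (auto simp: tensor_diff tensor_zero)
      finally show ?thesis .
    qed
  qed
  show ?thesis unfolding homologous_def
    using tX' D' by (intro exI[of _ X']) auto
qed

end
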